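(* Let $G$ be a cyclically $4$-edge-connected cubic graph and let $e_1=ab$ and $e_2=cd$ be two independent (non-adjacent) edges of $G$. Let $t\ge 2$ and let $H$ be the cubic graph obtained from $t$ copies of $G-e_1-e_2$ by joining them cyclically. Then $H$ is cyclically $4$-edge-connected.
   Context: Graphs are finite, undirected, loopless, and may contain parallel edges. A cubic graph is cyclically $4$-edge-connected if it has no edge cut of size less than $4$ whose removal leaves at least two components each containing a cycle. Joining cyclically: take $t$ copies of $G-e_1-e_2$, and denote by $a_i,b_i,c_i,d_i$ the vertices corresponding to $a,b,c,d$ in the $i$-th copy; for $i=1,\dots,t-1$ add the edges $d_ia_{i+1}$ and $c_ib_{i+1}$, and add the edges $d_ta_1$ and $c_tb_1$. The resulting graph is cubic. *)

theory Defs
  imports Main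
begin

text \<open>A finite loopless multigraph: vertex set V, edge set E (edge identifiers,
so parallel edges are allowed), and inc e = set of the two end vertices of e.\<close>

definition multigraph :: "'v set \<Rightarrow> 'e set \<Rightarrow> ('e \<Rightarrow> 'v set) \<Rightarrow> bool" where
  "multigraph V E inc \<longleftrightarrow> finite V \<and> finite E \<and>
     (\<forall>e\<in>E. inc e \<subseteq> V \<and> card (inc e) = 2)"

definition degree :: "'e set \<Rightarrow> ('e \<Rightarrow> 'v set) \<Rightarrow> 'v \<Rightarrow> nat" where
  "degree E inc v = card {e\<in>E. v \<in> inc e}"

definition cubic :: "'v set \<Rightarrow> 'e set \<Rightarrow> ('e \<Rightarrow> 'v set) \<Rightarrow> bool" where
  "cubic V E inc \<longleftrightarrow> multigraph V E inc \<and> (\<forall>v\<in>V. degree E inc v = 3)"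

definition adj :: "'e set \<Rightarrow> ('e \<Rightarrow> 'v set) \<Rightarrow> 'v \<Rightarrow> 'v \<Rightarrow> bool" where
  "adj E inc u v \<longleftrightarrow> (\<exists>e\<in>E. inc e = {u, v})"

definition components :: "'v set \<Rightarrow> 'e set \<Rightarrow> ('e \<Rightarrow> 'v set) \<Rightarrow> 'v set set" where
  "components V E inc = {{v\<in>V. (adj E inc)\<^sup>*\<^sup>* u v} | u. u \<in> V}"

text \<open>A cycle (of length k \<ge> 2; length 2 = pair of parallel edges) whose vertices lie
in C and whose edges lie in E.\<close>
definition has_cycle :: "'v set \<Rightarrow> 'e set \<Rightarrow> ('e \<Rightarrow> 'v set) \<Rightarrow> bool" where
  "has_cycle C E inc \<longleftrightarrow> (\<exists>vs es. length vs = length es \<and> length vs \<ge> 2 \<and>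
      distinct vs \<and> distinct es \<and> set vs \<subseteq> C \<and> set es \<subseteq> E \<and>
      (\<forall>i<length vs. inc (es ! i) = {vs ! i, vs ! ((i + 1) mod length vs)}))"

definition cyclic_edge_cut :: "'v set \<Rightarrow> 'e set \<Rightarrow> ('e \<Rightarrow> 'v set) \<Rightarrow> 'e set \<Rightarrow> bool" where
  "cyclic_edge_cut V E inc S \<longleftrightarrow> S \<subseteq> E \<and>
     (\<exists>C1 C2. C1 \<in> components V (E - S) inc \<and> C2 \<in> components V (E - S) inc \<and> C1 \<noteq> C2 \<and>
        has_cycle C1 (E - S) inc \<and> has_cycle C2 (E - S) inc)"

definition cyclically_4_edge_connected :: "'v set \<Rightarrow> 'e set \<Rightarrow> ('e \<Rightarrow> 'v set) \<Rightarrow> bool" where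
  "cyclically_4_edge_connected V E inc \<longleftrightarrow> cubic V E inc \<and>
     (\<forall>S. S \<subseteq> E \<and> card S < 4 \<longrightarrow> \<not> cyclic_edge_cut V E inc S)"

text \<open>Edges: Inl (e, i) is copy i of an edge e \<in> E - {e1, e2};
Inr (False, i) is the edge d_i a_{i+1}, Inr (True, i) is the edge c_i b_{i+1}
(indices mod t, so i = t-1 gives d_t a_1 and c_t b_1).\<close>

definition join_V :: "'v set \<Rightarrow> nat \<Rightarrow> ('v \<times> nat) set" where
  "join_V V t = V \<times> {..<t}"

definition join_E :: "'e set \<Rightarrow> 'e \<Rightarrow> 'e \<Rightarrow> nat \<Rightarrow> (('e \<times> nat) + (bool \<times> nat)) set" where
  "join_E E e1 e2 t = Inl ` ((E - {e1, e2}) \<times> {..<t}) \<union> Inr ` (UNIV \<times> {..<t})"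

fun join_inc :: "('e \<Rightarrow> 'v set) \<Rightarrow> 'v \<Rightarrow> 'v \<Rightarrow> 'v \<Rightarrow> 'v \<Rightarrow> nat \<Rightarrow>
    (('e \<times> nat) + (bool \<times> nat)) \<Rightarrow> ('v \<times> nat) set" where
  "join_inc inc a b c d t (Inl (e, i)) = (\<lambda>v. (v, i)) ` inc e"
| "join_inc inc a b c d t (Inr (False, i)) = {(d, i), (a, (i + 1) mod t)}"
| "join_inc inc a b c d t (Inr (True, i)) = {(c, i), (b, (i + 1) mod t)}"

end

theory Submission
  imports Defs
begin



definition cutset :: "'e set \<Rightarrow> ('e \<Rightarrow> 'v set) \<Rightarrow> 'v set \<Rightarrow> 'e set" where
  "cutset E inc Y = {e\<in>E. inc e \<inter> Y \<noteq> {} \<and> \<not> inc e \<subseteq> Y}"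

lemma card2_other:
  assumes "card S = 2" "v \<in> S"
  obtains w where "S = {v,w}" "w \<noteq> v"
proof -
  from assms(1) obtain x y where "S = {x,y}" "x \<noteq> y" by (auto simp: card_2_iff)
  with assms(2) that show ?thesis by auto
qed

lemma exists_other: "2 \<le> card A \<Longrightarrow> \<exists>x\<in>A. x \<noteq> y"
proof (rule ccontr)
  assume h: "2 \<le> card A" "\<not> (\<exists>x\<in>A. x \<noteq> y)"
  then have "A \<subseteq> {y}" by auto
  then have "card A \<le> 1" by (metis card.empty card.insert_remove card_mono finite.emptyI finite.insertI empty_Diff One_nat_def order_refl)
  with h show False by simp
qed

lemma cycle_from_path:
  assumes fin: "finite Y"
    and Fi: "\<And>e. e \<in> F \<Longrightarrow> inc e \<subseteq> Y \<and> card (inc e) = 2"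
    and deg: "\<And>v. v \<in> Y \<Longrightarrow> 2 \<le> card {e\<in>F. v \<in> inc e}"
  shows "vs \<noteq> [] \<Longrightarrow> length vs = Suc (length es) \<Longrightarrow> distinct vs \<Longrightarrow> distinct es \<Longrightarrow>
     set vs \<subseteq> Y \<Longrightarrow> set es \<subseteq> F \<Longrightarrow> (\<forall>i<length es. inc (es!i) = {vs!i, vs!Suc i}) \<Longrightarrow>
     has_cycle Y F inc"
proof (induction "card Y - length vs" arbitrary: vs es rule: less_induct)
  case less
  define n where "n = length vs"
  define v where "v = vs ! (n - 1)"
  have n1: "n \<ge> 1" using less.prems(1) by (cases vs) (auto simp: n_def)
  have vY: "v \<in> Y" using less.prems(5) n1 v_def n_def
    by (metis One_nat_def Suc_le_eq diff_less nth_mem subsetD zero_less_one)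
  obtain e' where e'F: "e' \<in> F" and ve': "v \<in> inc e'" and e'ne: "e' \<noteq> es ! (n - 2)"
  proof -
    from exists_other[OF deg[OF vY], of "es ! (n-2)"] obtain x where "x \<in> {e\<in>F. v \<in> inc e}" "x \<noteq> es!(n-2)" by blast
    then show ?thesis using that by blast
  qed
  obtain w where e'w: "inc e' = {v,w}" and wv: "w \<noteq> v" using card2_other Fi[OF e'F] ve' by metis
  have wY: "w \<in> Y" using Fi[OF e'F] e'w by auto
  have lenes: "length es = n - 1" using less.prems(2) n_def by simp
  show ?case
  proof (cases "w \<in> set vs")
    case False
    let ?vs = "vs @ [w]" let ?es = "es @ [e']"
    have dvs: "distinct ?vs" using False less.prems(3) by simp
    have svs: "set ?vs \<subseteq> Y" using less.prems(5) wY by simp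
    have lenY: "length ?vs \<le> card Y"
      using dvs svs fin by (metis card_mono distinct_card)
    have ne: "e' \<notin> set es"
    proof
      assume "e' \<in> set es"
      then obtain k where k: "k < length es" "es ! k = e'" by (metis in_set_conv_nth)
      then have "inc e' = {vs!k, vs!Suc k}" using less.prems(7) by auto
      moreover have "vs!k \<in> set vs" "vs ! Suc k \<in> set vs" using k less.prems(2) by auto
      ultimately have "w \<in> {vs!k, vs!Suc k}" using e'w by (metis insertCI)
      then show False using False k less.prems(2) by auto
    qed
    have cond: "\<forall>i<length ?es. inc (?es!i) = {?vs!i, ?vs!Suc i}"
    proof (intro allI impI)
      fix i assume i: "i < length ?es"
      show "inc (?es!i) = {?vs!i, ?vs!Suc i}"
      proof (cases "i < length es")
        case True
        then show ?thesis using less.prems(2,7) by (simp add: nth_append)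
      next
        case False
        then have ie: "i = length es" using i by simp
        have 1: "?es ! i = e'" using ie by simp
        have 2: "?vs ! i = v" unfolding v_def using ie less.prems(2) n_def by (simp add: nth_append)
        have 3: "?vs ! Suc i = w" using ie less.prems(2) by (simp add: nth_append)
        show ?thesis using 1 2 3 e'w by simp
      qed
    qed
    show ?thesis
      apply (rule less.hyps[of ?vs ?es])
      using lenY less.prems(2) n_def apply simp
              apply simp
             using less.prems(2) apply simp
            using dvs apply simp
           using less.prems(4) ne apply simp
          using svs apply simp
         using less.prems(6) e'F apply simp
        using cond by simp
  next
    case True
    then obtain j where j: "j < n" "vs ! j = w" by (metis in_set_conv_nth n_def)
    have jn: "j \<noteq> n - 1" using wv v_def j by auto
    then have jn2: "j \<le> n - 2" "n \<ge> 2" using j by auto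
    define vs' where "vs' = drop j vs"
    define es' where "es' = drop j es @ [e']"
    have lvs': "length vs' = n - j" using vs'_def n_def by simp
    have les': "length es' = n - j" using es'_def lenes jn2 by simp
    have nin: "e' \<notin> set (drop j es)"
    proof
      assume "e' \<in> set (drop j es)"
      then obtain k where k: "k < length (drop j es)" "drop j es ! k = e'" by (metis in_set_conv_nth)
      define m where "m = j + k"
      have m: "m < n - 1" "es ! m = e'" using k lenes jn2 m_def by auto
      have incm: "inc e' = {vs!m, vs!Suc m}" using less.prems(7) m lenes by auto
      show False
      proof (cases "m = n - 2")
        case True
        then show ?thesis using m e'ne by simp
      next
        case False
        then have sm: "Suc m < n - 1" using m by simp
        have "vs ! Suc m \<in> {vs ! (n - 1), vs ! j}" using incm e'w v_def j by auto
        moreover have "vs ! Suc m \<noteq> vs ! (n-1)"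
          using less.prems(3) sm n_def by (simp add: nth_eq_iff_index_eq)
        moreover have "vs ! Suc m \<noteq> vs ! j"
          using nth_eq_iff_index_eq[OF less.prems(3), of "Suc m" j] sm j(1) n_def m_def by auto
        ultimately show False by simp
      qed
    qed
    show ?thesis unfolding has_cycle_def
    proof (intro exI conjI)
      show "length vs' = length es'" using lvs' les' by simp
      show "2 \<le> length vs'" using lvs' jn2 by simp
      show "distinct vs'" using vs'_def less.prems(3) by simp
      show "distinct es'" using es'_def less.prems(4) nin by simp
      show "set vs' \<subseteq> Y" using vs'_def less.prems(5) by (meson order_trans set_drop_subset)
      show "set es' \<subseteq> F" using es'_def less.prems(6) e'F by (auto dest: in_set_dropD)
      show "\<forall>i<length vs'. inc (es' ! i) = {vs' ! i, vs' ! ((i + 1) mod length vs')}"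
      proof (intro allI impI)
        fix i assume i: "i < length vs'"
        show "inc (es' ! i) = {vs' ! i, vs' ! ((i + 1) mod length vs')}"
        proof (cases "i < n - 1 - j")
          case True
          then have "es' ! i = es ! (j + i)" using es'_def lenes jn2 by (simp add: nth_append)
          moreover have "vs' ! i = vs ! (j + i)" using vs'_def i lvs' n_def by simp
          moreover have "(i + 1) mod length vs' = i + 1" using True lvs' by simp
          moreover have "vs' ! (i+1) = vs ! (j + i + 1)" using vs'_def True n_def jn2 by simp
          moreover have "j + i < length es" using True lenes by simp
          ultimately show ?thesis using less.prems(7) by simp
        next
          case False
          then have ii: "i = n - 1 - j" using i lvs' by simp
          then have "es' ! i = e'" using es'_def lenes jn2 by (simp add: nth_append)
          moreover have "vs' ! i = v" using vs'_def ii v_def n_def jn2 by simp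
          moreover have "(i + 1) mod length vs' = 0"
          proof -
            have "i + 1 = length vs'" using ii lvs' jn2 by simp
            then show ?thesis by simp
          qed
          moreover have "vs' ! 0 = w" using vs'_def j n_def by simp
          ultimately show ?thesis using e'w by simp
        qed
      qed
    qed
  qed
qed




lemma cut_compl: "multigraph V E inc \<Longrightarrow> Y \<subseteq> V \<Longrightarrow> cutset E inc (V - Y) = cutset E inc Y"
  unfolding cutset_def multigraph_def by blast

lemma cut_single: "multigraph V E inc \<Longrightarrow> cutset E inc {v} = {e\<in>E. v \<in> inc e}"
proof -
  assume mg: "multigraph V E inc"
  have "\<not> inc e \<subseteq> {v}" if "e \<in> E" for e
  proof
    assume "inc e \<subseteq> {v}"
    then have "card (inc e) \<le> 1" by (metis card.empty card.insert finite.emptyI insert_absorb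
          subset_singletonD le_numeral_extra(1) One_nat_def card_insert_disjoint empty_iff order_refl zero_le)
    with mg that show False unfolding multigraph_def by auto
  qed
  then show ?thesis unfolding cutset_def by auto
qed

lemma has_cycle_mono: "has_cycle C F inc \<Longrightarrow> C \<subseteq> C' \<Longrightarrow> F \<subseteq> F' \<Longrightarrow> has_cycle C' F' inc"
  unfolding has_cycle_def by (meson order_trans)

lemma cubic_deg: "cubic V E inc \<Longrightarrow> v \<in> V \<Longrightarrow> card {e\<in>E. v \<in> inc e} = 3"
  unfolding cubic_def degree_def by auto

lemma cyc_lemma:
  assumes cub: "cubic V E inc"
  shows "Y \<subseteq> V \<Longrightarrow> 2 \<le> card Y \<Longrightarrow> card (cutset E inc Y) \<le> 3 \<Longrightarrow> has_cycle Y {e\<in>E. inc e \<subseteq> Y} inc"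
proof (induction "card Y" arbitrary: Y rule: less_induct)
  case less
  have mg: "multigraph V E inc" using cub unfolding cubic_def by simp
  then have finV: "finite V" and finE: "finite E" and Ei: "\<And>e. e \<in> E \<Longrightarrow> inc e \<subseteq> V \<and> card (inc e) = 2"
    unfolding multigraph_def by auto
  have finY: "finite Y" using less.prems(1) finV finite_subset by blast
  let ?EY = "{e\<in>E. inc e \<subseteq> Y}"
  show ?case
  proof (cases "\<exists>v\<in>Y. card {e\<in>?EY. v\<in>inc e} \<le> 1")
    case True
    then obtain v where vY: "v \<in> Y" and cB: "card {e\<in>?EY. v\<in>inc e} \<le> 1" by blast
    define Dv where "Dv = {e\<in>E. v\<in>inc e}"
    define A where "A = cutset E inc Y \<inter> Dv"
    define B where "B = {e\<in>?EY. v\<in>inc e}"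
    have DAB: "Dv = A \<union> B" unfolding Dv_def A_def B_def cutset_def using vY by auto
    have AB: "A \<inter> B = {}" unfolding A_def B_def cutset_def by auto
    have finA: "finite A" unfolding A_def cutset_def using finE by simp
    have finB: "finite B" unfolding B_def using finE by simp
    have cD: "card Dv = 3" unfolding Dv_def using cubic_deg[OF cub] vY less.prems(1) by auto
    have cAB: "card A + card B = 3" using cD DAB AB finA finB card_Un_disjoint by metis
    have cB': "card B \<le> 1" using cB B_def by simp
    have sub: "cutset E inc (Y - {v}) \<subseteq> (cutset E inc Y - A) \<union> B"
    proof
      fix e assume e: "e \<in> cutset E inc (Y - {v})"
      then have eE: "e \<in> E" and m: "inc e \<inter> (Y - {v}) \<noteq> {}" and nm: "\<not> inc e \<subseteq> Y - {v}"
        unfolding cutset_def by auto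
      show "e \<in> (cutset E inc Y - A) \<union> B"
      proof (cases "v \<in> inc e")
        case True
        obtain x where x: "x \<in> inc e" "x \<in> Y" "x \<noteq> v" using m by auto
        obtain w where w: "inc e = {v,w}" "w \<noteq> v" using card2_other Ei[OF eE] True by metis
        have "x = w" using x w by auto
        then have "inc e \<subseteq> Y" using w x vY by auto
        then show ?thesis unfolding B_def using eE True by auto
      next
        case False
        then have "e \<in> cutset E inc Y" using m nm eE unfolding cutset_def by auto
        moreover have "e \<notin> A" unfolding A_def Dv_def using False by auto
        ultimately show ?thesis by auto
      qed
    qed
    have finC: "finite (cutset E inc Y)" unfolding cutset_def using finE by simp
    have "card (cutset E inc (Y - {v})) \<le> card ((cutset E inc Y - A) \<union> B)"
      using sub finC finB by (intro card_mono) auto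
    also have "\<dots> \<le> card (cutset E inc Y - A) + card B" by (rule card_Un_le)
    also have "card (cutset E inc Y - A) = card (cutset E inc Y) - card A"
      using finA A_def by (intro card_Diff_subset) auto
    finally have cY': "card (cutset E inc (Y - {v})) \<le> 2" using cAB cB' less.prems(3) by linarith
    have cardY': "card (Y - {v}) = card Y - 1" using vY finY by simp
    show ?thesis
    proof (cases "card Y = 2")
      case True
      then have "card (Y - {v}) = 1" using cardY' by simp
      then obtain u where u: "Y - {v} = {u}" by (metis card_1_singletonE)
      then have uV: "u \<in> V" using less.prems(1) by auto
      have "card (cutset E inc {u}) = 3" using cut_single[OF mg] cubic_deg[OF cub uV] by simp
      then show ?thesis using cY' u by simp
    next
      case False
      then have c2: "2 \<le> card (Y - {v})" using cardY' less.prems(2) by simp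
      have lt: "card (Y - {v}) < card Y" using cardY' less.prems(2) by simp
      have c3: "card (cutset E inc (Y - {v})) \<le> 3" using cY' by simp
      have "has_cycle (Y - {v}) {e\<in>E. inc e \<subseteq> Y - {v}} inc"
        using less.hyps[OF lt _ c2 c3] less.prems(1) by auto
      then show ?thesis by (rule has_cycle_mono) auto
    qed
  next
    case False
    then have dg: "\<And>v. v \<in> Y \<Longrightarrow> 2 \<le> card {e\<in>?EY. v\<in>inc e}" by force
    obtain v0 where v0: "v0 \<in> Y" using less.prems(2) by fastforce
    show ?thesis
      apply (rule cycle_from_path[OF finY _ dg, of "[v0]" "[]"])
      using Ei v0 by auto
  qed
qed

lemma comp_cycle:
  assumes mg: "multigraph V E inc" and YV: "Y \<subseteq> V" and hc: "has_cycle Y {e\<in>E. inc e \<subseteq> Y} inc"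
  shows "\<exists>C\<in>components V (E - cutset E inc Y) inc. C \<subseteq> Y \<and> C \<noteq> {} \<and> has_cycle C (E - cutset E inc Y) inc"
proof -
  let ?S = "cutset E inc Y"
  let ?R = "adj (E - ?S) inc"
  obtain vs es where c: "length vs = length es" "length vs \<ge> 2" "distinct vs" "distinct es"
      "set vs \<subseteq> Y" "set es \<subseteq> {e\<in>E. inc e \<subseteq> Y}"
      "\<forall>i<length vs. inc (es ! i) = {vs ! i, vs ! ((i + 1) mod length vs)}"
    using hc unfolding has_cycle_def by blast
  define u where "u = vs ! 0"
  have "0 < length vs" using c(2) by linarith
  then have uY: "u \<in> Y" using c(5) u_def by (metis nth_mem subsetD)
  define C where "C = {x\<in>V. ?R\<^sup>*\<^sup>* u x}"
  have stay: "?R\<^sup>*\<^sup>* x y \<Longrightarrow> x \<in> Y \<Longrightarrow> y \<in> Y" for x y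
  proof (induction rule: rtranclp_induct)
    case base then show ?case .
  next
    case (step y z)
    then obtain e where e: "e \<in> E - ?S" "inc e = {y,z}" unfolding adj_def by blast
    then show ?case using step unfolding cutset_def by auto
  qed
  have esS: "set es \<subseteq> E - ?S" using c(6) unfolding cutset_def by auto
  have reach: "i < length vs \<Longrightarrow> ?R\<^sup>*\<^sup>* u (vs ! i)" for i
  proof (induction i)
    case 0 then show ?case by (simp add: u_def)
  next
    case (Suc i)
    have i: "i < length es" using Suc.prems c(1) by simp
    have "inc (es ! i) = {vs ! i, vs ! Suc i}" using c(7) Suc.prems by auto
    moreover have "es ! i \<in> E - ?S" using esS i by (meson nth_mem subsetD)
    ultimately have "?R (vs ! i) (vs ! Suc i)" unfolding adj_def by blast
    then show ?case using Suc by (meson Suc_lessD rtranclp.rtrancl_into_rtrancl)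
  qed
  have CY: "C \<subseteq> Y" unfolding C_def using stay uY by blast
  have vsC: "set vs \<subseteq> C" unfolding C_def using reach c(5) YV by (auto simp: in_set_conv_nth)
  have "C \<in> components V (E - ?S) inc" unfolding components_def C_def using uY YV by blast
  moreover have "C \<noteq> {}" using vsC c(2) by auto
  moreover have "has_cycle C (E - ?S) inc" unfolding has_cycle_def using c vsC esS by blast
  ultimately show ?thesis using CY by blast
qed

lemma G_strong:
  assumes cub: "cubic V E inc" and c4: "cyclically_4_edge_connected V E inc"
    and YV: "Y \<subseteq> V" and c1: "2 \<le> card Y" and c2: "2 \<le> card (V - Y)"
  shows "4 \<le> card (cutset E inc Y)"
proof (rule ccontr)
  assume "\<not> 4 \<le> card (cutset E inc Y)"
  then have le: "card (cutset E inc Y) \<le> 3" by simp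
  have mg: "multigraph V E inc" using cub unfolding cubic_def by simp
  have cc: "cutset E inc (V - Y) = cutset E inc Y" using cut_compl[OF mg YV] .
  have h1: "has_cycle Y {e\<in>E. inc e \<subseteq> Y} inc" using cyc_lemma[OF cub YV c1 le] .
  have h2: "has_cycle (V - Y) {e\<in>E. inc e \<subseteq> V - Y} inc"
    using cyc_lemma[OF cub _ c2] le cc by auto
  obtain C1 where C1: "C1 \<in> components V (E - cutset E inc Y) inc" "C1 \<subseteq> Y" "C1 \<noteq> {}"
      "has_cycle C1 (E - cutset E inc Y) inc" using comp_cycle[OF mg YV h1] by blast
  obtain C2 where C2: "C2 \<in> components V (E - cutset E inc Y) inc" "C2 \<subseteq> V - Y" "C2 \<noteq> {}"
      "has_cycle C2 (E - cutset E inc Y) inc" using comp_cycle[OF mg _ h2] cc by auto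
  have "C1 \<noteq> C2" using C1(2,3) C2(2) by blast
  then have "cyclic_edge_cut V E inc (cutset E inc Y)"
    unfolding cyclic_edge_cut_def using C1 C2 unfolding cutset_def by blast
  moreover have "cutset E inc Y \<subseteq> E" unfolding cutset_def by auto
  ultimately show False using c4 le unfolding cyclically_4_edge_connected_def by auto
qed




lemma card_minus2: "finite A \<Longrightarrow> x \<noteq> y \<Longrightarrow>
  card A \<le> card (A - {x,y}) + (if x \<in> A then 1 else 0) + (if y \<in> A then 1 else 0)"
proof -
  assume f: "finite A" and xy: "x \<noteq> y"
  have "A = (A - {x,y}) \<union> (A \<inter> {x,y})" by blast
  then have "card A \<le> card (A - {x,y}) + card (A \<inter> {x,y})" by (metis card_Un_le)
  moreover have "card (A \<inter> {x,y}) \<le> (if x \<in> A then 1 else 0) + (if y \<in> A then 1 else 0)"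
  proof (cases "x \<in> A"; cases "y \<in> A")
    assume "x \<in> A" "y \<in> A" then have "A \<inter> {x,y} = {x,y}" by blast
    then show ?thesis using xy \<open>x \<in> A\<close> \<open>y \<in> A\<close> by simp
  next
    assume "x \<in> A" "y \<notin> A" then have "A \<inter> {x,y} = {x}" by blast
    then show ?thesis using \<open>x \<in> A\<close> \<open>y \<notin> A\<close> by simp
  next
    assume "x \<notin> A" "y \<in> A" then have "A \<inter> {x,y} = {y}" by blast
    then show ?thesis using \<open>x \<notin> A\<close> \<open>y \<in> A\<close> by simp
  next
    assume "x \<notin> A" "y \<notin> A" then have "A \<inter> {x,y} = {}" by blast
    then show ?thesis using \<open>x \<notin> A\<close> \<open>y \<notin> A\<close> by simp
  qed
  ultimately show ?thesis by linarith
qed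

lemma cyc_ivt:
  assumes "P j" "\<not> P j'" "j < t" "j' < (t::nat)"
  shows "\<exists>k<t. P k \<and> \<not> P ((k+1) mod t)"
proof (rule ccontr)
  assume h: "\<not> ?thesis"
  have "P ((j + m) mod t)" for m
  proof (induction m)
    case 0 then show ?case using assms by simp
  next
    case (Suc m)
    have "(j + m) mod t < t" using assms(3) by simp
    then have "P (((j + m) mod t + 1) mod t)" using h Suc by blast
    then show ?case by (simp add: mod_Suc_eq)
  qed
  from this[of "j' + t - j"] have "P ((j' + t) mod t)" using assms(3) by simp
  then show False using assms(2,4) by simp
qed

locale JS =
  fixes V :: "'v set" and E :: "'e set" and inc :: "'e \<Rightarrow> 'v set"
    and e1 e2 :: 'e and a b c d :: 'v and t :: nat
  assumes cub: "cubic V E inc" and c4: "cyclically_4_edge_connected V E inc"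
    and e1E: "e1 \<in> E" and e2E: "e2 \<in> E" and i1: "inc e1 = {a,b}" and i2: "inc e2 = {c,d}"
    and dst: "distinct [a,b,c,d]" and t2: "t \<ge> 2"
begin

abbreviation "VH \<equiv> join_V V t"
abbreviation "EH \<equiv> join_E E e1 e2 t"
abbreviation "iH \<equiv> join_inc inc a b c d t"

definition sl :: "('v \<times> nat) set \<Rightarrow> nat \<Rightarrow> 'v set" where "sl X i = {v\<in>V. (v,i) \<in> X}"

lemma mg: "multigraph V E inc" using cub unfolding cubic_def by simp
lemma finV: "finite V" using mg unfolding multigraph_def by simp
lemma finE: "finite E" using mg unfolding multigraph_def by simp
lemma Ei: "e \<in> E \<Longrightarrow> inc e \<subseteq> V \<and> card (inc e) = 2" using mg unfolding multigraph_def by simp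
lemma abcd: "a \<in> V" "b \<in> V" "c \<in> V" "d \<in> V" using Ei[OF e1E] Ei[OF e2E] i1 i2 by auto
lemma e12: "e1 \<noteq> e2" using i1 i2 dst by auto
lemma Vne: "V \<noteq> {}" using abcd by auto

lemma mgH: "multigraph VH EH iH"
proof -
  have f1: "finite VH" unfolding join_V_def using finV by simp
  have f2: "finite EH" unfolding join_E_def using finE by simp
  have f3: "iH x \<subseteq> VH \<and> card (iH x) = 2" if x: "x \<in> EH" for x
  proof (cases x)
    case (Inl p)
    then obtain e i where p: "x = Inl (e,i)" "e \<in> E" "i < t" using x unfolding join_E_def by auto
    have "inj_on (\<lambda>v. (v,i)) (inc e)" by (auto simp: inj_on_def)
    then have "card (iH x) = card (inc e)" using p by (simp add: card_image)
    then show ?thesis using p Ei[OF p(2)] unfolding join_V_def by auto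
  next
    case (Inr p)
    then obtain \<beta> k where p: "x = Inr (\<beta>,k)" "k < t" using x unfolding join_E_def by auto
    have tp: "0 < t" using t2 by simp
    show ?thesis using p abcd dst tp unfolding join_V_def by (cases \<beta>) auto
  qed
  show ?thesis unfolding multigraph_def using f1 f2 f3 by blast
qed

lemma finEH: "finite EH" using mgH unfolding multigraph_def by simp

lemma conn_false: "k < t \<Longrightarrow> Inr (False,k) \<in> cutset EH iH X \<longleftrightarrow> ((d,k) \<in> X \<longleftrightarrow> (a,(k+1) mod t) \<notin> X)"
  unfolding cutset_def join_E_def by auto

lemma conn_true: "k < t \<Longrightarrow> Inr (True,k) \<in> cutset EH iH X \<longleftrightarrow> ((c,k) \<in> X \<longleftrightarrow> (b,(k+1) mod t) \<notin> X)"
  unfolding cutset_def join_E_def by auto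

lemma internal: "i < t \<Longrightarrow> (\<lambda>e. Inl (e,i)) ` (cutset E inc (sl X i) - {e1,e2}) \<subseteq> cutset EH iH X"
proof
  fix x :: "('e \<times> nat) + (bool \<times> nat)" assume i: "i < t" and x: "x \<in> (\<lambda>e. Inl (e,i)) ` (cutset E inc (sl X i) - {e1,e2})"
  then obtain e where e: "x = Inl (e,i)" "e \<in> E" "e \<noteq> e1" "e \<noteq> e2"
     "inc e \<inter> sl X i \<noteq> {}" "\<not> inc e \<subseteq> sl X i" unfolding cutset_def by auto
  have "x \<in> EH" using e i unfolding join_E_def by auto
  moreover have "iH x \<inter> X \<noteq> {}" using e unfolding sl_def by auto
  moreover have "\<not> iH x \<subseteq> X" using e Ei[OF e(2)] unfolding sl_def by auto
  ultimately show "x \<in> cutset EH iH X" unfolding cutset_def by auto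
qed

lemma internal_card: "card ((\<lambda>e. Inl (e,i)) ` A) = card A"
  by (rule card_image) (auto simp: inj_on_def)

lemma single_bound: "v \<in> V \<Longrightarrow> 2 \<le> card (cutset E inc {v} - {e1,e2})"
proof -
  assume vV: "v \<in> V"
  define Dv where "Dv = {e\<in>E. v \<in> inc e}"
  have cs: "cutset E inc {v} = Dv" using cut_single[OF mg] Dv_def by simp
  have cD: "card Dv = 3" using cubic_deg[OF cub vV] Dv_def by simp
  have fD: "finite Dv" using finE Dv_def by simp
  show ?thesis
  proof (cases "e2 \<in> Dv")
    case False
    then have "Dv - {e1,e2} = Dv - {e1}" by auto
    then show ?thesis using cs cD fD by (simp add: card_Diff_singleton_if)
  next
    case True
    then have "e1 \<notin> Dv" using i1 i2 dst unfolding Dv_def by auto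
    then have "Dv - {e1,e2} = Dv - {e2}" by auto
    then show ?thesis using cs cD fD by (simp add: card_Diff_singleton_if)
  qed
qed

lemma mixed_bound:
  assumes YV: "Y \<subseteq> V" and ne: "Y \<noteq> {}" and nV: "Y \<noteq> V"
  shows "2 \<le> card (cutset E inc Y - {e1,e2})"
proof -
  have fY: "finite Y" using YV finV finite_subset by blast
  have fC: "finite (cutset E inc Y)" unfolding cutset_def using finE by simp
  have fVY: "finite (V - Y)" using finV by simp
  show ?thesis
  proof (cases "card Y = 1")
    case True
    then obtain v where "Y = {v}" by (metis card_1_singletonE)
    then show ?thesis using single_bound YV by auto
  next
    case False
    note F1 = False
    show ?thesis
    proof (cases "card (V - Y) = 1")
      case True
      then obtain v where v: "V - Y = {v}" by (metis card_1_singletonE)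
      then have "v \<in> V" by auto
      then show ?thesis using single_bound v cut_compl[OF mg YV] by metis
    next
      case False
      have "card Y \<noteq> 0" using fY ne by simp
      then have c1: "2 \<le> card Y" using F1 by simp
      have "V - Y \<noteq> {}" using YV nV by auto
      then have "card (V - Y) \<noteq> 0" using fVY by simp
      then have c2: "2 \<le> card (V - Y)" using False by simp
      have g: "4 \<le> card (cutset E inc Y)" using G_strong[OF cub c4 YV c1 c2] .
      have "card (cutset E inc Y) - card {e1,e2} \<le> card (cutset E inc Y - {e1,e2})"
        by (rule diff_card_le_card_Diff) simp
      moreover have "card {e1,e2} = 2" using e12 by simp
      ultimately show ?thesis using g by simp
    qed
  qed
qed

end



context JS begin

lemma sl_sub: "sl X k \<subseteq> V" unfolding sl_def by auto

lemma tpos: "0 < t" using t2 by simp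

lemma gap_cross:
  assumes k: "k < t" and h: "(sl X k = V \<and> sl X ((k+1) mod t) = {}) \<or> (sl X k = {} \<and> sl X ((k+1) mod t) = V)"
  shows "Inr (False,k) \<in> cutset EH iH X \<and> Inr (True,k) \<in> cutset EH iH X"
proof -
  let ?k = "(k+1) mod t"
  have m: "\<And>v j. v \<in> V \<Longrightarrow> (v,j) \<in> X \<longleftrightarrow> v \<in> sl X j" unfolding sl_def by auto
  from h show ?thesis
  proof
    assume h1: "sl X k = V \<and> sl X ?k = {}"
    have "(d,k) \<in> X" "(c,k) \<in> X" using m abcd h1 by blast+
    moreover have "(a,?k) \<notin> X" "(b,?k) \<notin> X" using m abcd h1 by blast+
    ultimately show ?thesis using conn_false[OF k] conn_true[OF k] by blast
  next
    assume h1: "sl X k = {} \<and> sl X ?k = V"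
    have "(d,k) \<notin> X" "(c,k) \<notin> X" using m abcd h1 by blast+
    moreover have "(a,?k) \<in> X" "(b,?k) \<in> X" using m abcd h1 by blast+
    ultimately show ?thesis using conn_false[OF k] conn_true[OF k] by blast
  qed
qed

lemma pred_mod: "i < t \<Longrightarrow> ((i + t - 1) mod t + 1) mod t = i"
proof -
  assume i: "i < t"
  have "((i + t - 1) mod t + 1) mod t = (i + t - 1 + 1) mod t" by (rule mod_add_left_eq)
  also have "i + t - 1 + 1 = i + t" using tpos by linarith
  also have "(i + t) mod t = i mod t" by (rule mod_add_self2)
  also have "i mod t = i" using i by (rule mod_less)
  finally show ?thesis .
qed

lemma pred_ne: "i < t \<Longrightarrow> (i + t - 1) mod t \<noteq> i"
proof -
  assume i: "i < t"
  show ?thesis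
  proof (cases "i = 0")
    case True
    have "t - 1 < t" using tpos by linarith
    then have "(t - 1) mod t = t - 1" by (rule mod_less)
    moreover have "t - 1 \<noteq> 0" using t2 by linarith
    ultimately show ?thesis using True by simp
  next
    case False
    then have e: "i + t - 1 = (i - 1) + t" by linarith
    have "((i - 1) + t) mod t = (i - 1) mod t" by (rule mod_add_self2)
    also have "(i - 1) mod t = i - 1" using i by (intro mod_less) linarith
    finally have "(i + t - 1) mod t = i - 1" using e by simp
    then show ?thesis using False by linarith
  qed
qed

lemma succ_ne: "i < t \<Longrightarrow> (i + 1) mod t \<noteq> i"
proof -
  assume i: "i < t"
  show ?thesis
  proof (cases "i + 1 < t")
    case True
    then have "(i + 1) mod t = i + 1" by (rule mod_less)
    then show ?thesis by simp
  next
    case False then have e: "i + 1 = t" using i by linarith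
    have "t mod t = 0" by simp
    then show ?thesis using e t2 by simp
  qed
qed

lemma finC: "finite (cutset EH iH X)" using finEH unfolding cutset_def by simp

lemma Lin:
  assumes XV: "X \<subseteq> VH" and cX: "2 \<le> card (VH - X)" and i: "i < t" and ne: "sl X i \<noteq> {}"
    and oth: "\<forall>k<t. k \<noteq> i \<longrightarrow> sl X k = V"
  shows "4 \<le> card (cutset EH iH X)"
proof -
  define Y where "Y = sl X i"
  have YV: "Y \<subseteq> V" using sl_sub Y_def by simp
  have finY: "finite Y" using YV finV finite_subset by blast
  have sub: "VH - X \<subseteq> (\<lambda>v. (v,i)) ` (V - Y)"
  proof
    fix x assume x: "x \<in> VH - X"
    then obtain v k where vk: "x = (v,k)" "v \<in> V" "k < t" "(v,k) \<notin> X" unfolding join_V_def by auto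
    have "k = i"
    proof (rule ccontr)
      assume "k \<noteq> i" then have "sl X k = V" using oth vk by auto
      then have "(v,k) \<in> X" using vk unfolding sl_def by auto
      then show False using vk by simp
    qed
    then show "x \<in> (\<lambda>v. (v,i)) ` (V - Y)" using vk Y_def unfolding sl_def by auto
  qed
  have "card (VH - X) \<le> card ((\<lambda>v. (v,i)) ` (V - Y))" using sub finV by (intro card_mono) auto
  also have "\<dots> \<le> card (V - Y)" by (rule card_image_le) (use finV in simp)
  finally have cZ: "2 \<le> card (V - Y)" using cX by simp
  have YnV: "Y \<noteq> V" using cZ by auto
  define p where "p = (i + t - 1) mod t"
  have p: "p < t" "(p+1) mod t = i" "p \<noteq> i" using pred_mod[OF i] pred_ne[OF i] tpos p_def by auto
  define q where "q = (i + 1) mod t"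
  have q: "q < t" "q \<noteq> i" using succ_ne[OF i] tpos q_def by auto
  have inp: "sl X p = V" using oth p by auto
  have inq: "sl X q = V" using oth q by auto
  have memX: "\<And>v k. v \<in> V \<Longrightarrow> (v,k) \<in> X \<longleftrightarrow> v \<in> sl X k" unfolding sl_def by auto
  have ca: "a \<notin> Y \<Longrightarrow> Inr (False,p) \<in> cutset EH iH X"
    using conn_false[OF p(1)] p(2) memX abcd inp Y_def by auto
  have cb: "b \<notin> Y \<Longrightarrow> Inr (True,p) \<in> cutset EH iH X"
    using conn_true[OF p(1)] p(2) memX abcd inp Y_def by auto
  have cd: "d \<notin> Y \<Longrightarrow> Inr (False,i) \<in> cutset EH iH X"
    using conn_false[OF i] q_def memX abcd inq Y_def by auto
  have cc: "c \<notin> Y \<Longrightarrow> Inr (True,i) \<in> cutset EH iH X"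
    using conn_true[OF i] q_def memX abcd inq Y_def by auto
  define I :: "(('e \<times> nat) + (bool \<times> nat)) set" where "I = (\<lambda>e. Inl (e,i)) ` (cutset E inc Y - {e1,e2})"
  define K1 where "K1 = {Inr (False,p), Inr (True,p)} \<inter> cutset EH iH X"
  define K2 where "K2 = {Inr (False,i), Inr (True,i)} \<inter> cutset EH iH X"
  have IC: "I \<subseteq> cutset EH iH X" using internal[OF i] I_def Y_def by simp
  have U: "I \<union> K1 \<union> K2 \<subseteq> cutset EH iH X" using IC K1_def K2_def by auto
  have fI: "finite I" unfolding I_def cutset_def using finE by simp
  have fK1: "finite K1" unfolding K1_def by simp
  have fK2: "finite K2" unfolding K2_def by simp
  have d1: "I \<inter> K1 = {}" "I \<inter> K2 = {}" unfolding I_def K1_def K2_def by auto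
  have d2: "K1 \<inter> K2 = {}" unfolding K1_def K2_def using p(3) by auto
  have cU: "card (I \<union> K1 \<union> K2) = card I + card K1 + card K2"
  proof -
    have "card (I \<union> K1) = card I + card K1" using card_Un_disjoint[OF fI fK1 d1(1)] .
    moreover have "(I \<union> K1) \<inter> K2 = {}" using d1 d2 by auto
    ultimately show ?thesis using card_Un_disjoint[of "I \<union> K1" K2] fI fK1 fK2 by simp
  qed
  have k1: "a \<notin> Y \<or> b \<notin> Y \<Longrightarrow> 1 \<le> card K1"
  proof -
    assume "a \<notin> Y \<or> b \<notin> Y"
    then have "K1 \<noteq> {}" using ca cb K1_def by auto
    then show ?thesis using fK1 by (simp add: Suc_le_eq card_gt_0_iff)
  qed
  have k2: "c \<notin> Y \<or> d \<notin> Y \<Longrightarrow> 1 \<le> card K2"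
  proof -
    assume "c \<notin> Y \<or> d \<notin> Y"
    then have "K2 \<noteq> {}" using cc cd K2_def by auto
    then show ?thesis using fK2 by (simp add: Suc_le_eq card_gt_0_iff)
  qed
  have cI: "card I = card (cutset E inc Y - {e1,e2})" unfolding I_def by (rule internal_card)
  have main: "4 \<le> card I + card K1 + card K2"
  proof (cases "card Y = 1")
    case True
    then obtain v where v: "Y = {v}" by (metis card_1_singletonE)
    have "a \<notin> Y \<or> b \<notin> Y" using v dst by auto
    moreover have "c \<notin> Y \<or> d \<notin> Y" using v dst by auto
    moreover have "2 \<le> card I" using cI mixed_bound[OF YV _ YnV] v by simp
    ultimately show ?thesis using k1 k2 by linarith
  next
    case False
    have "card Y \<noteq> 0" using finY ne Y_def by simp
    then have c2: "2 \<le> card Y" using False by simp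
    have g: "4 \<le> card (cutset E inc Y)" using G_strong[OF cub c4 YV c2 cZ] .
    have fCG: "finite (cutset E inc Y)" unfolding cutset_def using finE by simp
    have m2: "card (cutset E inc Y) \<le> card (cutset E inc Y - {e1,e2}) + (if e1 \<in> cutset E inc Y then 1 else 0)
        + (if e2 \<in> cutset E inc Y then 1 else 0)" using card_minus2[OF fCG e12] .
    have x1: "(if e1 \<in> cutset E inc Y then 1 else 0) \<le> card K1"
    proof (cases "e1 \<in> cutset E inc Y")
      case True
      then have "\<not> inc e1 \<subseteq> Y" unfolding cutset_def by auto
      then have "a \<notin> Y \<or> b \<notin> Y" using i1 by auto
      then show ?thesis using k1 True by simp
    qed simp
    have x2: "(if e2 \<in> cutset E inc Y then 1 else 0) \<le> card K2"
    proof (cases "e2 \<in> cutset E inc Y")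
      case True
      then have "\<not> inc e2 \<subseteq> Y" unfolding cutset_def by auto
      then have "c \<notin> Y \<or> d \<notin> Y" using i2 by auto
      then show ?thesis using k2 True by simp
    qed simp
    show ?thesis using g m2 x1 x2 cI by linarith
  qed
  have "card (I \<union> K1 \<union> K2) \<le> card (cutset EH iH X)" using U finC by (rule card_mono[rotated])
  then show ?thesis using cU main by simp
qed

end



context JS begin

lemma sl_compl: "k < t \<Longrightarrow> sl (VH - X) k = V - sl X k" unfolding sl_def join_V_def by auto

lemma Ibd:
  assumes "i < t" "sl X i \<noteq> {}" "sl X i \<noteq> V"
  shows "2 \<le> card ((\<lambda>e. Inl (e,i)) ` (cutset E inc (sl X i) - {e1,e2}) :: (('e \<times> nat) + (bool \<times> nat)) set)"
  using mixed_bound[OF sl_sub assms(2,3)] internal_card by metis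

lemma H_bound:
  assumes XV: "X \<subseteq> VH" and c1: "2 \<le> card X" and c2: "2 \<le> card (VH - X)"
  shows "4 \<le> card (cutset EH iH X)"
proof (cases "\<exists>i<t. sl X i \<noteq> {} \<and> sl X i \<noteq> V")
  case True
  then obtain i where i: "i<t" "sl X i \<noteq> {}" "sl X i \<noteq> V" by blast
  define Ii :: "(('e \<times> nat) + (bool \<times> nat)) set" where "Ii = (\<lambda>e. Inl (e,i)) ` (cutset E inc (sl X i) - {e1,e2})"
  have Ii: "Ii \<subseteq> cutset EH iH X" "2 \<le> card Ii" "finite Ii"
    using internal[OF i(1)] Ibd[OF i] Ii_def finE unfolding cutset_def by auto
  show ?thesis
  proof (cases "\<exists>j<t. j \<noteq> i \<and> sl X j \<noteq> {} \<and> sl X j \<noteq> V")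
    case True
    then obtain j where j: "j<t" "j \<noteq> i" "sl X j \<noteq> {}" "sl X j \<noteq> V" by blast
    define Ij :: "(('e \<times> nat) + (bool \<times> nat)) set" where "Ij = (\<lambda>e. Inl (e,j)) ` (cutset E inc (sl X j) - {e1,e2})"
    have Ij: "Ij \<subseteq> cutset EH iH X" "2 \<le> card Ij" "finite Ij"
      using internal[OF j(1)] Ibd[OF j(1,3,4)] Ij_def finE unfolding cutset_def by auto
    have "Ii \<inter> Ij = {}" using j(2) Ii_def Ij_def by auto
    then have "card (Ii \<union> Ij) = card Ii + card Ij" using Ii Ij card_Un_disjoint by metis
    moreover have "card (Ii \<union> Ij) \<le> card (cutset EH iH X)" using Ii Ij finC by (intro card_mono) auto
    ultimately show ?thesis using Ii Ij by linarith
  next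
    case False
    then have pure: "\<And>k. k<t \<Longrightarrow> k \<noteq> i \<Longrightarrow> sl X k = {} \<or> sl X k = V" by blast
    show ?thesis
    proof (cases "\<forall>k<t. k \<noteq> i \<longrightarrow> sl X k = V")
      case True then show ?thesis using Lin[OF XV c2 i(1) i(2)] by blast
    next
      case notin: False
      show ?thesis
      proof (cases "\<forall>k<t. k \<noteq> i \<longrightarrow> sl X k = {}")
        case True
        have e: "VH - (VH - X) = X" using XV by blast
        have "4 \<le> card (cutset EH iH (VH - X))"
        proof (rule Lin)
          show "VH - X \<subseteq> VH" by blast
          show "2 \<le> card (VH - (VH - X))" using e c1 by simp
          show "i < t" by fact
          show "sl (VH - X) i \<noteq> {}" using sl_compl[OF i(1)] i(3) sl_sub by blast
          show "\<forall>k<t. k \<noteq> i \<longrightarrow> sl (VH - X) k = V" using sl_compl True by auto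
        qed
        then show ?thesis using cut_compl[OF mgH XV] by simp
      next
        case False
        obtain j where j: "j<t" "j\<noteq>i" "sl X j = {}" using notin pure by blast
        obtain j' where j': "j'<t" "j'\<noteq>i" "sl X j' = V" using False pure by blast
        have gap: "\<exists>g<t. (sl X g = V \<and> sl X ((g+1) mod t) = {}) \<or> (sl X g = {} \<and> sl X ((g+1) mod t) = V)"
        proof -
          obtain k where k: "k<t" "sl X k = V \<or> k = i" "\<not> (sl X ((k+1) mod t) = V \<or> (k+1) mod t = i)"
            using cyc_ivt[of "\<lambda>k. sl X k = V \<or> k = i" j' j t] j j' Vne by auto
          have k1: "sl X ((k+1) mod t) = {}" using pure[of "(k+1) mod t"] k tpos by auto
          show ?thesis
          proof (cases "sl X k = V")
            case True then show ?thesis using k k1 by blast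
          next
            case False
            then have ki: "k = i" using k by simp
            obtain k' where k': "k'<t" "sl X k' = {} \<or> k' = i" "\<not> (sl X ((k'+1) mod t) = {} \<or> (k'+1) mod t = i)"
              using cyc_ivt[of "\<lambda>k. sl X k = {} \<or> k = i" j j' t] j j' Vne by auto
            have k1': "sl X ((k'+1) mod t) = V" using pure[of "(k'+1) mod t"] k' tpos by auto
            show ?thesis
            proof (cases "sl X k' = {}")
              case True then show ?thesis using k' k1' by blast
            next
              case False
              then have "k' = i" using k' by simp
              then show ?thesis using k1 k1' ki Vne by simp
            qed
          qed
        qed
        then obtain g where g: "g < t" "(sl X g = V \<and> sl X ((g+1) mod t) = {}) \<or> (sl X g = {} \<and> sl X ((g+1) mod t) = V)"
          by blast
        have gc: "Inr (False,g) \<in> cutset EH iH X" "Inr (True,g) \<in> cutset EH iH X"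
          using gap_cross[OF g] by auto
        let ?K = "{Inr (False,g), Inr (True,g)} :: (('e \<times> nat) + (bool \<times> nat)) set"
        have "Ii \<inter> ?K = {}" using Ii_def by auto
        then have "card (Ii \<union> ?K) = card Ii + card ?K" using Ii card_Un_disjoint by (metis finite.emptyI finite.insertI)
        moreover have "card ?K = 2" by simp
        moreover have "card (Ii \<union> ?K) \<le> card (cutset EH iH X)" using Ii gc finC by (intro card_mono) auto
        ultimately show ?thesis using Ii by linarith
      qed
    qed
  qed
next
  case False
  then have pure: "\<And>k. k<t \<Longrightarrow> sl X k = {} \<or> sl X k = V" by blast
  have "X \<noteq> {}" using c1 by auto
  then obtain v k where vk: "(v,k) \<in> X" by auto
  then have vk2: "v \<in> V" "k < t" using XV unfolding join_V_def by auto
  then have "v \<in> sl X k" using vk unfolding sl_def by auto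
  then have in1: "sl X k = V" using pure vk2 by blast
  have "VH - X \<noteq> {}"
  proof
    assume "VH - X = {}" then have "card (VH - X) = 0" by (simp only: card.empty)
    with c2 show False by simp
  qed
  then obtain w k' where wk: "(w,k') \<in> VH - X" by auto
  then have wk2: "w \<in> V" "k' < t" "(w,k') \<notin> X" unfolding join_V_def by auto
  then have "w \<notin> sl X k'" unfolding sl_def by auto
  then have out1: "sl X k' = {}" using pure wk2 by blast
  obtain g where g: "g<t" "sl X g = V" "\<not> sl X ((g+1) mod t) = V"
    using cyc_ivt[of "\<lambda>k. sl X k = V" k k' t] in1 out1 vk2 wk2 Vne by auto
  have g1: "sl X ((g+1) mod t) = {}" using pure[of "(g+1) mod t"] g tpos by auto
  obtain h where h: "h<t" "sl X h = {}" "\<not> sl X ((h+1) mod t) = {}"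
    using cyc_ivt[of "\<lambda>k. sl X k = {}" k' k t] in1 out1 vk2 wk2 Vne by auto
  have h1: "sl X ((h+1) mod t) = V" using pure[of "(h+1) mod t"] h tpos by auto
  have gh: "g \<noteq> h" using g h Vne by auto
  have c: "Inr (False,g) \<in> cutset EH iH X" "Inr (True,g) \<in> cutset EH iH X"
    using gap_cross[OF g(1)] g g1 by auto
  have c': "Inr (False,h) \<in> cutset EH iH X" "Inr (True,h) \<in> cutset EH iH X"
    using gap_cross[OF h(1)] h h1 by auto
  let ?K = "{Inr (False,g), Inr (True,g), Inr (False,h), Inr (True,h)} :: (('e \<times> nat) + (bool \<times> nat)) set"
  have "card ?K = 4" using gh by simp
  moreover have "card ?K \<le> card (cutset EH iH X)" using c c' finC by (intro card_mono) auto
  ultimately show ?thesis by simp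
qed

end



context JS begin

lemma succ_inj: "k < t \<Longrightarrow> k' < t \<Longrightarrow> (k+1) mod t = (k'+1) mod t \<Longrightarrow> k = k'"
proof -
  assume k: "k < t" and k': "k' < t" and e: "(k+1) mod t = (k'+1) mod t"
  have f: "\<And>m. m < t \<Longrightarrow> (m+1) mod t = (if m + 1 = t then 0 else m + 1)"
  proof -
    fix m assume m: "m < t"
    show "(m+1) mod t = (if m + 1 = t then 0 else m + 1)"
    proof (cases "m + 1 = t")
      case True then show ?thesis by simp
    next
      case False then have "m + 1 < t" using m by linarith
      then show ?thesis using False by (simp add: mod_less)
    qed
  qed
  show ?thesis using f[OF k] f[OF k'] e k k' by (auto split: if_splits)
qed

lemma cv_char: "i < t \<Longrightarrow> k < t \<Longrightarrow> ((k+1) mod t = i \<longleftrightarrow> k = (i + t - 1) mod t)"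
proof -
  assume i: "i < t" and k: "k < t"
  have p: "(i + t - 1) mod t < t" using tpos by simp
  show ?thesis
  proof
    assume "(k+1) mod t = i"
    then have "(k+1) mod t = ((i + t - 1) mod t + 1) mod t" using pred_mod[OF i] by simp
    then show "k = (i + t - 1) mod t" using succ_inj[OF k p] by simp
  next
    assume "k = (i + t - 1) mod t"
    then show "(k+1) mod t = i" using pred_mod[OF i] by simp
  qed
qed

lemma degH:
  assumes vV: "v \<in> V" and i: "i < t"
  shows "card {x\<in>EH. (v,i) \<in> iH x} = 3"
proof -
  define Dv where "Dv = {e\<in>E. v \<in> inc e}"
  define Cv where "Cv = {y\<in>(UNIV :: bool set) \<times> {..<t}. (v,i) \<in> iH (Inr y)}"
  define p where "p = (i + t - 1) mod t"
  have pt: "p < t" using tpos p_def by simp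
  have pi: "p \<noteq> i" using pred_ne[OF i] p_def by simp
  have pm: "(p+1) mod t = i" using pred_mod[OF i] p_def by simp
  have cvp: "\<And>k. k < t \<Longrightarrow> ((k+1) mod t = i \<longleftrightarrow> k = p)" using cv_char[OF i] p_def by simp
  have cD: "card Dv = 3" using cubic_deg[OF cub vV] Dv_def by simp
  have fD: "finite Dv" using finE Dv_def by simp
  have eq: "{x\<in>EH. (v,i) \<in> iH x} = (\<lambda>e. Inl (e,i)) ` (Dv - {e1,e2}) \<union> Inr ` Cv"
  proof (rule set_eqI)
    fix x :: "('e \<times> nat) + (bool \<times> nat)"
    show "x \<in> {x\<in>EH. (v,i) \<in> iH x} \<longleftrightarrow> x \<in> (\<lambda>e. Inl (e,i)) ` (Dv - {e1,e2}) \<union> Inr ` Cv"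
    proof (cases x)
      case (Inl y)
      then obtain e j where "x = Inl (e,j)" by (cases y) auto
      then show ?thesis using i unfolding Dv_def join_E_def by auto
    next
      case (Inr y)
      then show ?thesis unfolding Cv_def join_E_def by auto
    qed
  qed
  have cC: "card (Dv - {e1,e2}) + card Cv = 3"
  proof -
    have cvc: "(\<beta>,k) \<in> Cv \<longleftrightarrow> k < t \<and> (if \<beta> then (v = c \<and> k = i) \<or> (v = b \<and> k = p)
        else (v = d \<and> k = i) \<or> (v = a \<and> k = p))" for \<beta> k
    proof (cases \<beta>)
      case True
      show ?thesis
      proof
        assume "(\<beta>,k) \<in> Cv"
        then have kt: "k < t" and o: "(v = c \<and> k = i) \<or> (v = b \<and> (k+1) mod t = i)" unfolding Cv_def using True by auto
        have "(k+1) mod t = i \<Longrightarrow> k = p" using cvp[OF kt] by blast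
        then have "(v = c \<and> k = i) \<or> (v = b \<and> k = p)" using o by blast
        then show "k < t \<and> (if \<beta> then (v = c \<and> k = i) \<or> (v = b \<and> k = p)
          else (v = d \<and> k = i) \<or> (v = a \<and> k = p))" using kt True by simp
      next
        assume h: "k < t \<and> (if \<beta> then (v = c \<and> k = i) \<or> (v = b \<and> k = p)
          else (v = d \<and> k = i) \<or> (v = a \<and> k = p))"
        then show "(\<beta>,k) \<in> Cv" unfolding Cv_def using True cvp pm pt by auto
      qed
    next
      case False
      show ?thesis
      proof
        assume "(\<beta>,k) \<in> Cv"
        then have kt: "k < t" and o: "(v = d \<and> k = i) \<or> (v = a \<and> (k+1) mod t = i)" unfolding Cv_def using False by auto
        have "(k+1) mod t = i \<Longrightarrow> k = p" using cvp[OF kt] by blast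
        then have "(v = d \<and> k = i) \<or> (v = a \<and> k = p)" using o by blast
        then show "k < t \<and> (if \<beta> then (v = c \<and> k = i) \<or> (v = b \<and> k = p)
          else (v = d \<and> k = i) \<or> (v = a \<and> k = p))" using kt False by simp
      next
        assume h: "k < t \<and> (if \<beta> then (v = c \<and> k = i) \<or> (v = b \<and> k = p)
          else (v = d \<and> k = i) \<or> (v = a \<and> k = p))"
        then show "(\<beta>,k) \<in> Cv" unfolding Cv_def using False cvp pm pt by auto
      qed
    qed
    show ?thesis
    proof (cases "v = a \<or> v = b")
      case True
      then have "e1 \<in> Dv" "e2 \<notin> Dv" using dst i1 i2 e1E Dv_def by auto
      then have "Dv - {e1,e2} = Dv - {e1}" by auto
      then have c1: "card (Dv - {e1,e2}) = 2" using cD fD \<open>e1 \<in> Dv\<close> by simp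
      have "Cv = (if v = a then {(False,p)} else {(True,p)})" using True cvc dst pt pi by (auto split: if_splits)
      then have "card Cv = 1" by simp
      then show ?thesis using c1 by simp
    next
      case F1: False
      show ?thesis
      proof (cases "v = c \<or> v = d")
        case True
        then have "e2 \<in> Dv" "e1 \<notin> Dv" using dst i1 i2 e2E Dv_def by auto
        then have "Dv - {e1,e2} = Dv - {e2}" by auto
        then have c1: "card (Dv - {e1,e2}) = 2" using cD fD \<open>e2 \<in> Dv\<close> by simp
        have "Cv = (if v = d then {(False,i)} else {(True,i)})" using True cvc dst i by (auto split: if_splits)
        then have "card Cv = 1" by simp
        then show ?thesis using c1 by simp
      next
        case False
        then have "e2 \<notin> Dv" "e1 \<notin> Dv" using F1 i1 i2 Dv_def by auto
        then have "Dv - {e1,e2} = Dv" by auto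
        moreover have "Cv = {}" using False F1 cvc by (auto split: if_splits)
        ultimately show ?thesis using cD by simp
      qed
    qed
  qed
  have fC: "finite Cv" unfolding Cv_def by simp
  have "card ((\<lambda>e. Inl (e,i)) ` (Dv - {e1,e2}) \<union> Inr ` Cv :: (('e \<times> nat) + (bool \<times> nat)) set)
      = card ((\<lambda>e. Inl (e,i)) ` (Dv - {e1,e2}) :: (('e \<times> nat) + (bool \<times> nat)) set) + card (Inr ` Cv :: (('e \<times> nat) + (bool \<times> nat)) set)"
    by (rule card_Un_disjoint) (use fD fC in auto)
  also have "card ((\<lambda>e. Inl (e,i)) ` (Dv - {e1,e2}) :: (('e \<times> nat) + (bool \<times> nat)) set) = card (Dv - {e1,e2})"
    by (rule internal_card)
  also have "card (Inr ` Cv :: (('e \<times> nat) + (bool \<times> nat)) set) = card Cv" by (rule card_image) simp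
  finally show ?thesis using eq cC by simp
qed

lemma cubicH: "cubic VH EH iH"
  unfolding cubic_def degree_def
proof (intro conjI ballI)
  show "multigraph VH EH iH" by (rule mgH)
  fix x assume "x \<in> VH"
  then obtain v i where "x = (v,i)" "v \<in> V" "i < t" unfolding join_V_def by auto
  then show "card {e\<in>EH. x \<in> iH e} = 3" using degH by simp
qed

end

lemma rtranclp_sym:
  assumes "\<And>x y. R x y \<Longrightarrow> R y x"
  shows "R\<^sup>*\<^sup>* x y \<Longrightarrow> R\<^sup>*\<^sup>* y x"
proof (induction rule: rtranclp_induct)
  case base then show ?case by simp
next
  case (step y z)
  have "R z y" using step(2) assms by blast
  then show ?case using step(3) by (rule converse_rtranclp_into_rtranclp)
qed

lemma adj_sym: "adj E inc x y \<Longrightarrow> adj E inc y x"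
proof -
  assume "adj E inc x y"
  then obtain e where e: "e \<in> E" "inc e = {x,y}" unfolding adj_def by blast
  have "{x,y} = {y,x}" by blast
  then show ?thesis unfolding adj_def using e by metis
qed

lemma comp_cut:
  assumes mg: "multigraph V E inc" and C: "C \<in> components V (E - S) inc"
  shows "cutset E inc C \<subseteq> S"
proof
  fix e assume e: "e \<in> cutset E inc C"
  obtain u where C': "C = {v\<in>V. (adj (E - S) inc)\<^sup>*\<^sup>* u v}" "u \<in> V" using C unfolding components_def by auto
  from e obtain x y where xy: "e \<in> E" "x \<in> inc e" "x \<in> C" "y \<in> inc e" "y \<notin> C" unfolding cutset_def by auto
  have "x \<noteq> y" using xy by auto
  have ie: "inc e \<subseteq> V" "card (inc e) = 2" using mg xy(1) unfolding multigraph_def by auto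
  obtain w where w: "inc e = {x,w}" "w \<noteq> x" using card2_other[OF ie(2) xy(2)] by metis
  have yw: "y = w" using w xy \<open>x \<noteq> y\<close> by auto
  show "e \<in> S"
  proof (rule ccontr)
    assume "e \<notin> S"
    then have eS: "e \<in> E - S" using xy(1) by blast
    have "inc e = {x,y}" using w yw by simp
    then have "adj (E - S) inc x y" unfolding adj_def using eS by blast
    moreover have "(adj (E - S) inc)\<^sup>*\<^sup>* u x" using xy(3) C'(1) by blast
    ultimately have "(adj (E - S) inc)\<^sup>*\<^sup>* u y" by (rule rtranclp.rtrancl_into_rtrancl[rotated])
    moreover have "y \<in> V" using ie xy(4) by blast
    ultimately show False using xy(5) C'(1) by blast
  qed
qed

lemma comp_disj:
  assumes C1: "C1 \<in> components V F inc" and C2: "C2 \<in> components V F inc" and ne: "C1 \<noteq> C2"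
  shows "C1 \<inter> C2 = {}"
proof (rule ccontr)
  assume "C1 \<inter> C2 \<noteq> {}"
  then obtain x where x: "x \<in> C1" "x \<in> C2" by auto
  obtain u1 where u1: "C1 = {v\<in>V. (adj F inc)\<^sup>*\<^sup>* u1 v}" using C1 unfolding components_def by auto
  obtain u2 where u2: "C2 = {v\<in>V. (adj F inc)\<^sup>*\<^sup>* u2 v}" using C2 unfolding components_def by auto
  have s: "(adj F inc)\<^sup>*\<^sup>* b a" if "(adj F inc)\<^sup>*\<^sup>* a b" for a b
    by (rule rtranclp_sym[where R="adj F inc", OF _ that]) (erule adj_sym)
  have 1: "(adj F inc)\<^sup>*\<^sup>* u1 x" "(adj F inc)\<^sup>*\<^sup>* u2 x" using x u1 u2 by auto
  have 12: "(adj F inc)\<^sup>*\<^sup>* u1 u2" using rtranclp_trans[OF 1(1) s[OF 1(2)]] .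
  have 21: "(adj F inc)\<^sup>*\<^sup>* u2 u1" using s[OF 12] .
  have "\<And>z. (adj F inc)\<^sup>*\<^sup>* u1 z \<longleftrightarrow> (adj F inc)\<^sup>*\<^sup>* u2 z"
    using rtranclp_trans[OF 12] rtranclp_trans[OF 21] by blast
  then have "C1 = C2" unfolding u1 u2 by simp
  then show False using ne by simp
qed

lemma cycle_card: "has_cycle C F inc \<Longrightarrow> finite C \<Longrightarrow> 2 \<le> card C"
proof -
  assume h: "has_cycle C F inc" and f: "finite C"
  then obtain vs where vs: "length vs \<ge> 2" "distinct vs" "set vs \<subseteq> C" unfolding has_cycle_def by blast
  have "card (set vs) = length vs" using vs(2) by (rule distinct_card)
  moreover have "card (set vs) \<le> card C" using vs(3) f by (rule card_mono[rotated])
  ultimately show ?thesis using vs(1) by simp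
qed

theorem mainTheorem4:
  fixes V :: "'v set" and E :: "'e set" and inc :: "'e \<Rightarrow> 'v set"
    and e1 e2 :: 'e and a b c d :: 'v and t :: nat
  assumes "cubic V E inc"
    and "cyclically_4_edge_connected V E inc"
    and "e1 \<in> E" and "e2 \<in> E"
    and "inc e1 = {a, b}" and "inc e2 = {c, d}"
    and "distinct [a, b, c, d]"
    and "t \<ge> 2"
  shows "cyclically_4_edge_connected (join_V V t) (join_E E e1 e2 t) (join_inc inc a b c d t)"
proof -
  interpret JS V E inc e1 e2 a b c d t
    apply unfold_locales using assms by simp_all
  show ?thesis unfolding cyclically_4_edge_connected_def
  proof (intro conjI allI impI)
    show "cubic VH EH iH" by (rule cubicH)
    fix S assume S: "S \<subseteq> EH \<and> card S < 4"
    show "\<not> cyclic_edge_cut VH EH iH S"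
    proof
      assume "cyclic_edge_cut VH EH iH S"
      then obtain C1 C2 where C: "C1 \<in> components VH (EH - S) iH" "C2 \<in> components VH (EH - S) iH"
        "C1 \<noteq> C2" "has_cycle C1 (EH - S) iH" "has_cycle C2 (EH - S) iH"
        unfolding cyclic_edge_cut_def by blast
      have finVH: "finite VH" using mgH unfolding multigraph_def by simp
      have C1V: "C1 \<subseteq> VH" using C(1) unfolding components_def by auto
      have C2V: "C2 \<subseteq> VH" using C(2) unfolding components_def by auto
      have cs: "cutset EH iH C1 \<subseteq> S" using comp_cut[OF mgH C(1)] .
      have fS: "finite S" using S finEH finite_subset by blast
      have "card (cutset EH iH C1) \<le> card S" using cs fS by (rule card_mono[rotated])
      then have lt: "card (cutset EH iH C1) < 4" using S by simp
      have c1: "2 \<le> card C1" using cycle_card[OF C(4)] C1V finVH finite_subset by blast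
      have c2: "2 \<le> card C2" using cycle_card[OF C(5)] C2V finVH finite_subset by blast
      have "C1 \<inter> C2 = {}" using comp_disj[OF C(1,2,3)] .
      then have "C2 \<subseteq> VH - C1" using C2V by blast
      then have "card C2 \<le> card (VH - C1)" using finVH by (intro card_mono) auto
      then have "2 \<le> card (VH - C1)" using c2 by simp
      then have "4 \<le> card (cutset EH iH C1)" using H_bound[OF C1V c1] by simp
      then show False using lt by simp
    qed
  qed
qed



end
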